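(* Let $t\in\mathbb{R}$, $r_t=\mu e^{-t}$ and $R_t=\lceil r_t\rceil$. Then $$0\le\frac{\operatorname{li}(e^tR_t)}{e^t}<\frac{\operatorname{li}(\mu+e^t)}{e^t}<\frac{1}{\log\mu}$$ and $$0\le\frac{R_t-r_t}{t+\log R_t}\le\frac{R_t-r_t}{t+\log\frac{R_t+r_t}{2}}\le\frac{\operatorname{li}(e^tR_t)}{e^t}\le\frac{R_t-r_t}{\log\mu}<\frac{1}{\log\mu}.$$
   Context: $\operatorname{li}(x)=\int_0^x\frac{du}{\log u}$ (principal value) is the logarithmic integral; $\mu=1.451369\ldots$ is the Ramanujan–Soldner constant, the unique positive zero of $\operatorname{li}$. *)

theory Defs
  imports "HOL-Analysis.Analysis"
begin

text \<open>Logarithmic integral as a Cauchy principal value: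
  for 0 <= x < 1 an ordinary (improper at 0, but bounded) integral;
  for x > 1 the principal value around the singularity at u = 1.
  The value at x = 1 (where li = -infinity) is irrelevant.\<close>
definition li :: "real \<Rightarrow> real" where
  "li x = (if x < 1 then integral {0..x} (\<lambda>u. 1 / ln u)
           else Lim (at_right 0)
             (\<lambda>\<epsilon>. integral {0..1-\<epsilon>} (\<lambda>u. 1 / ln u) + integral {1+\<epsilon>..x} (\<lambda>u. 1 / ln u)))"

text \<open>Ramanujan--Soldner constant: the unique positive zero of li (it lies in (1,2)).\<close>
definition soldner_mu :: real where
  "soldner_mu = (THE x. x > 1 \<and> li x = 0)"

end

theory Submission
  imports Defs
begin

definition gg :: "real \<Rightarrow> real" where "gg u = 1 / ln u - 1 / (u - 1)"

lemma ln_ge_aux: "0 < (u::real) \<Longrightarrow> 1 - 1/u \<le> ln u"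
proof -
  assume u: "0 < u"
  have "ln (1/u) \<le> 1/u - 1" using u by (intro ln_le_minus_one) simp
  thus ?thesis using u by (simp add: ln_div)
qed

lemma gg_bounds: assumes "0 < u" "u \<noteq> 1" shows "0 \<le> gg u" "gg u \<le> 1"
proof -
  have a: "ln u \<le> u - 1" using assms by (intro ln_le_minus_one)
  have b: "(u-1)/u \<le> ln u" using ln_ge_aux[OF assms(1)] assms by (simp add: field_simps)
  have e: "u/(u-1) - 1/(u-1) = 1" using assms by (simp add: divide_simps)
  have "1/(u-1) \<le> 1 / ln u \<and> 1 / ln u \<le> u/(u-1)"
  proof (cases "u < 1")
    case True
    have l: "ln u < 0" using True assms by simp
    have "inverse (ln u) \<le> inverse ((u-1)/u)" using b l by (rule le_imp_inverse_le_neg)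
    moreover have "inverse (u-1) \<le> inverse (ln u)" using a l True by (intro le_imp_inverse_le_neg) auto
    ultimately show ?thesis by (simp add: inverse_eq_divide)
  next
    case False
    then have u1: "u > 1" using assms by simp
    have l: "ln u > 0" using u1 by simp
    have "inverse (ln u) \<le> inverse ((u-1)/u)" using b u1 by (intro le_imp_inverse_le) auto
    moreover have "inverse (u-1) \<le> inverse (ln u)" using a l by (intro le_imp_inverse_le) auto
    ultimately show ?thesis by (simp add: inverse_eq_divide)
  qed
  thus "0 \<le> gg u" "gg u \<le> 1" unfolding gg_def using e by linarith+
qed

lemma gg_bounds': "0 < u \<Longrightarrow> 0 \<le> gg u \<and> gg u \<le> 1"
proof (cases "u = 1")
  case True thus ?thesis by (simp add: gg_def)
next
  case False assume "0 < u" thus ?thesis using gg_bounds[of u] False by auto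
qed

lemma gg_cont: "continuous_on S gg" if "S \<subseteq> {0<..} - {1}"
  unfolding gg_def using that by (intro continuous_intros) auto

lemma gg_int_open: assumes "a \<ge> 0" "S = {a<..<b}" "1 \<notin> {a<..<b}" shows "gg integrable_on S"
proof -
  have "continuous_on S gg" using assms by (intro gg_cont) auto
  hence m: "gg \<in> borel_measurable (lebesgue_on S)" using assms
    by (intro continuous_imp_measurable_on_sets_lebesgue) auto
  show ?thesis
  proof (rule measurable_bounded_by_integrable_imp_integrable_real[OF m])
    show "(\<lambda>_. 1::real) integrable_on S" using assms by (intro integrable_on_const) auto
    show "\<bar>gg x\<bar> \<le> 1" if "x \<in> S" for x using gg_bounds'[of x] that assms by auto
    show "S \<in> sets lebesgue" using assms by auto
  qed
qed

lemma gg_int01: "gg integrable_on {0..1}"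
  using gg_int_open[of 0 "{0<..<1}" 1] integrable_on_open_interval_real by auto

lemma gg_int1: "b \<ge> 1 \<Longrightarrow> gg integrable_on {1..b}"
  using gg_int_open[of 1 "{1<..<b}" b] integrable_on_open_interval_real by auto

lemma gg_int_sub: "0 \<le> a \<Longrightarrow> a \<le> b \<Longrightarrow> gg integrable_on {a..b}"
proof -
  assume ab: "0 \<le> a" "a \<le> b"
  have "gg integrable_on {0..max 1 b}"
    using Henstock_Kurzweil_Integration.integrable_combine[OF _ _ gg_int01 gg_int1[of "max 1 b"]] by auto
  thus ?thesis by (rule integrable_subinterval_real) (use ab in auto)
qed

lemma gg_integral_bounds: "0 \<le> a \<Longrightarrow> a \<le> b \<Longrightarrow> 0 \<le> integral {a..b} gg \<and> integral {a..b} gg \<le> b - a"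
proof -
  assume ab: "0 \<le> a" "a \<le> b"
  have i: "gg integrable_on {a<..<b}" using gg_int_sub[OF ab] integrable_on_open_interval_real by blast
  have "0 \<le> integral {a<..<b} gg" using gg_bounds' ab by (intro integral_nonneg[OF i]) auto
  moreover have "integral {a<..<b} gg \<le> integral {a<..<b} (\<lambda>_. 1::real)"
    using gg_bounds' ab by (intro integral_le[OF i]) (auto intro: integrable_on_const)
  ultimately show ?thesis using ab by (simp add: integral_open_interval_real[symmetric])
qed

lemma recip_ln_split_hi: assumes "1 < a" "a \<le> b"
  shows "((\<lambda>u. 1 / ln u) has_integral (integral {a..b} gg + (ln (b-1) - ln (a-1)))) {a..b}"
proof -
  have f: "((\<lambda>u. 1/(u-1)) has_integral (ln (b-1) - ln (a-1))) {a..b}"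
  proof (rule fundamental_theorem_of_calculus[OF assms(2)])
    fix x assume "x \<in> {a..b}"
    hence "x > 1" using assms by auto
    thus "((\<lambda>u. ln (u-1)) has_vector_derivative 1/(x-1)) (at x within {a..b})"
      by (auto intro!: derivative_eq_intros simp: has_real_derivative_iff_has_vector_derivative[symmetric])
  qed
  have g: "(gg has_integral integral {a..b} gg) {a..b}" using gg_int_sub[of a b] assms by auto
  have "((\<lambda>u. gg u + 1/(u-1)) has_integral (integral {a..b} gg + (ln (b-1) - ln (a-1)))) {a..b}"
    by (rule has_integral_add[OF g f])
  thus ?thesis by (simp add: gg_def)
qed

lemma recip_ln_split_lo: assumes "0 \<le> c" "c < 1"
  shows "((\<lambda>u. 1 / ln u) has_integral (integral {0..c} gg + ln (1-c))) {0..c}"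
proof -
  have f: "((\<lambda>u. 1/(u-1)) has_integral (ln (1-c) - ln (1-0))) {0..c}"
  proof (rule fundamental_theorem_of_calculus[OF assms(1)])
    fix x assume "x \<in> {0..c}"
    hence "x < 1" using assms by auto
    thus "((\<lambda>u. ln (1-u)) has_vector_derivative 1/(x-1)) (at x within {0..c})"
      by (auto intro!: derivative_eq_intros simp: has_real_derivative_iff_has_vector_derivative[symmetric] field_simps)
  qed
  have g: "(gg has_integral integral {0..c} gg) {0..c}" using gg_int_sub[of 0 c] assms by auto
  have "((\<lambda>u. gg u + 1/(u-1)) has_integral (integral {0..c} gg + (ln (1-c) - ln (1-0)))) {0..c}"
    by (rule has_integral_add[OF g f])
  thus ?thesis by (simp add: gg_def)
qed

definition Lf :: "real \<Rightarrow> real" where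
  "Lf x = integral {0..1} gg + integral {1..x} gg + ln (x - 1)"

lemma li_eq: assumes x: "1 < x" shows "li x = Lf x"
proof -
  define F where "F = (\<lambda>\<epsilon>. integral {0..1-\<epsilon>} (\<lambda>u. 1 / ln u) + integral {1+\<epsilon>..x} (\<lambda>u. 1 / ln u))"
  have ev: "eventually (\<lambda>\<epsilon>. \<epsilon> \<in> {0<..<min 1 (x-1)}) (at_right 0)"
    using x by (intro eventually_at_right_real) auto
  have key: "\<bar>F \<epsilon> - Lf x\<bar> \<le> 2 * \<epsilon>" if e: "\<epsilon> \<in> {0<..<min 1 (x-1)}" for \<epsilon>
  proof -
    have e1: "0 < \<epsilon>" "\<epsilon> < 1" "1 + \<epsilon> < x" using e by auto
    have A: "integral {0..1-\<epsilon>} (\<lambda>u. 1 / ln u) = integral {0..1-\<epsilon>} gg + ln \<epsilon>"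
      using recip_ln_split_lo[of "1-\<epsilon>"] e1 by (auto dest: integral_unique)
    have B: "integral {1+\<epsilon>..x} (\<lambda>u. 1 / ln u) = integral {1+\<epsilon>..x} gg + (ln (x-1) - ln \<epsilon>)"
      using recip_ln_split_hi[of "1+\<epsilon>" x] e1 by (auto dest: integral_unique)
    have C: "integral {0..1-\<epsilon>} gg + integral {1-\<epsilon>..1} gg = integral {0..1} gg"
      using e1 by (intro Henstock_Kurzweil_Integration.integral_combine gg_int01) auto
    have D: "integral {1..1+\<epsilon>} gg + integral {1+\<epsilon>..x} gg = integral {1..x} gg"
      using e1 by (intro Henstock_Kurzweil_Integration.integral_combine gg_int1) auto
    have I1: "0 \<le> integral {1-\<epsilon>..1} gg \<and> integral {1-\<epsilon>..1} gg \<le> \<epsilon>"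
      using gg_integral_bounds[of "1-\<epsilon>" 1] e1 by auto
    have I2: "0 \<le> integral {1..1+\<epsilon>} gg \<and> integral {1..1+\<epsilon>} gg \<le> \<epsilon>"
      using gg_integral_bounds[of 1 "1+\<epsilon>"] e1 by auto
    show ?thesis unfolding F_def Lf_def A B using C D I1 I2 by linarith
  qed
  have "(F \<longlongrightarrow> Lf x) (at_right 0)"
  proof (rule tendsto_sandwich[where f="\<lambda>\<epsilon>. Lf x - 2 * \<epsilon>" and h="\<lambda>\<epsilon>. Lf x + 2 * \<epsilon>"])
    show "eventually (\<lambda>\<epsilon>. Lf x - 2 * \<epsilon> \<le> F \<epsilon>) (at_right 0)"
      using ev by eventually_elim (use key in fastforce)
    show "eventually (\<lambda>\<epsilon>. F \<epsilon> \<le> Lf x + 2 * \<epsilon>) (at_right 0)"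
      using ev by eventually_elim (use key in fastforce)
    show "((\<lambda>\<epsilon>. Lf x - 2 * \<epsilon>) \<longlongrightarrow> Lf x) (at_right 0)"
      by (auto intro!: tendsto_eq_intros)
    show "((\<lambda>\<epsilon>. Lf x + 2 * \<epsilon>) \<longlongrightarrow> Lf x) (at_right 0)"
      by (auto intro!: tendsto_eq_intros)
  qed
  hence "Lim (at_right 0) F = Lf x" by (intro tendsto_Lim) auto
  thus ?thesis using x unfolding li_def F_def by auto
qed

lemma recip_ln_int: "1 < (a::real) \<Longrightarrow> a \<le> b \<Longrightarrow> (\<lambda>u. 1 / ln u) integrable_on {a..b}"
  using recip_ln_split_hi[of a b] by blast

lemma li_diff: fixes a b :: real assumes "1 < a" "a \<le> b" shows "li b - li a = integral {a..b} (\<lambda>u. 1 / ln u)"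
proof -
  have "integral {1..a} gg + integral {a..b} gg = integral {1..b} gg"
    using assms by (intro Henstock_Kurzweil_Integration.integral_combine gg_int1) auto
  moreover have "integral {a..b} (\<lambda>u. 1 / ln u) = integral {a..b} gg + (ln (b-1) - ln (a-1))"
    using recip_ln_split_hi[OF assms] by (rule integral_unique)
  ultimately show ?thesis using assms li_eq[of a] li_eq[of b] unfolding Lf_def by simp
qed

lemma recip_ln_le: "1 < (a::real) \<Longrightarrow> a \<le> u \<Longrightarrow> u \<le> b \<Longrightarrow> 1 / ln b \<le> 1 / ln u \<and> 1 / ln u \<le> 1 / ln a"
proof -
  assume h: "1 < a" "a \<le> u" "u \<le> b"
  have "0 < ln a" "ln a \<le> ln u" "ln u \<le> ln b" using h by auto
  thus ?thesis by (auto intro!: divide_left_mono mult_pos_pos)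
qed

lemma int_upper: fixes a b :: real assumes "1 < a" "a \<le> b" shows "integral {a..b} (\<lambda>u. 1 / ln u) \<le> (b - a) / ln a"
proof -
  have "integral {a..b} (\<lambda>u. 1 / ln u) \<le> integral {a..b} (\<lambda>u. 1 / ln a)"
    using recip_ln_le[OF assms(1)] assms by (intro integral_le recip_ln_int) auto
  thus ?thesis using assms by simp
qed

lemma int_lower: fixes a b :: real assumes "1 < a" "a \<le> b" shows "(b - a) / ln b \<le> integral {a..b} (\<lambda>u. 1 / ln u)"
proof -
  have "integral {a..b} (\<lambda>u. 1 / ln b) \<le> integral {a..b} (\<lambda>u. 1 / ln u)"
    using recip_ln_le[OF assms(1)] assms by (intro integral_le recip_ln_int) auto
  thus ?thesis using assms by simp
qed

lemma int_pos: fixes a b :: real assumes "1 < a" "a < b" shows "0 < integral {a..b} (\<lambda>u. 1 / ln u)"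
proof -
  have "0 < (b - a) / ln b" using assms by auto
  thus ?thesis using int_lower[of a b] assms by linarith
qed

lemma int_upper_strict: fixes a b :: real assumes "1 < a" "a < b" shows "integral {a..b} (\<lambda>u. 1 / ln u) < (b - a) / ln a"
proof -
  define m where "m = (a + b) / 2"
  have m: "a < m" "m < b" using assms by (auto simp: m_def)
  have "integral {a..m} (\<lambda>u. 1 / ln u) + integral {m..b} (\<lambda>u. 1 / ln u) = integral {a..b} (\<lambda>u. 1 / ln u)"
    using m assms by (intro Henstock_Kurzweil_Integration.integral_combine recip_ln_int) auto
  moreover have "integral {a..m} (\<lambda>u. 1 / ln u) \<le> (m - a) / ln a" using int_upper[of a m] m assms by auto
  moreover have "integral {m..b} (\<lambda>u. 1 / ln u) \<le> (b - m) / ln m" using int_upper[of m b] m assms by auto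
  moreover have "(b - m) / ln m < (b - m) / ln a" using m assms by (intro divide_strict_left_mono) auto
  moreover have "(m - a) / ln a + (b - m) / ln a = (b - a) / ln a" by (simp add: diff_divide_distrib[symmetric] add_divide_distrib[symmetric])
  ultimately show ?thesis by linarith
qed

lemma recip_ln_tangent: fixes x y :: real assumes "1 < x" "1 < y"
  shows "(- 1 / (x * (ln x)\<^sup>2)) * (y - x) \<le> 1 / ln y - 1 / ln x"
proof (rule f''_imp_f'[where C="{1<..}" and f="\<lambda>u. 1 / ln u" and f'="\<lambda>u. - 1 / (u * (ln u)\<^sup>2)"
      and f''="\<lambda>u. (ln u + 2) / (u\<^sup>2 * (ln u) ^ 3)"])
  show "convex {(1::real)<..}" by simp
  show "x \<in> {1<..}" "y \<in> {1<..}" using assms by auto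
  fix z :: real assume z: "z \<in> {1<..}"
  hence z1: "1 < z" and lz: "0 < ln z" by auto
  show "DERIV (\<lambda>u. 1 / ln u) z :> - 1 / (z * (ln z)\<^sup>2)"
    using z1 lz by (auto intro!: derivative_eq_intros simp: field_simps power2_eq_square)
  show "DERIV (\<lambda>u. - 1 / (u * (ln u)\<^sup>2)) z :> (ln z + 2) / (z\<^sup>2 * (ln z) ^ 3)"
    using z1 lz by (auto intro!: derivative_eq_intros simp: field_simps power2_eq_square power3_eq_cube)
  show "0 \<le> (ln z + 2) / (z\<^sup>2 * (ln z) ^ 3)" using z1 lz by auto
qed

lemma int_hh: fixes a b :: real assumes ab: "1 < a" "a \<le> b"
  shows "(b - a) / ln ((a + b) / 2) \<le> integral {a..b} (\<lambda>u. 1 / ln u)"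
proof -
  define m where "m = (a + b) / 2"
  define c where "c = - 1 / (m * (ln m)\<^sup>2)"
  have m1: "1 < m" "a \<le> m" "m \<le> b" using ab by (auto simp: m_def)
  have p: "((\<lambda>u. u - m) has_integral ((b - m)\<^sup>2 / 2 - (a - m)\<^sup>2 / 2)) {a..b}"
  proof (rule fundamental_theorem_of_calculus[OF ab(2)])
    fix x assume "x \<in> {a..b}"
    show "((\<lambda>u. (u - m)\<^sup>2 / 2) has_vector_derivative (x - m)) (at x within {a..b})"
      by (auto intro!: derivative_eq_intros simp: has_real_derivative_iff_has_vector_derivative[symmetric])
  qed
  have z: "(b - m)\<^sup>2 / 2 - (a - m)\<^sup>2 / 2 = 0" by (simp add: m_def power2_eq_square field_simps)
  have p2: "((\<lambda>u. c * (u - m)) has_integral 0) {a..b}"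
    using has_integral_mult_right[OF p, of c] z by simp
  have lin: "((\<lambda>u. 1 / ln m + c * (u - m)) has_integral ((b - a) * (1 / ln m) + 0)) {a..b}"
    using has_integral_add[OF has_integral_const_real[of "1 / ln m" a b] p2] ab by simp
  have "(b - a) * (1 / ln m) + 0 \<le> integral {a..b} (\<lambda>u. 1 / ln u)"
  proof (rule has_integral_le[OF lin])
    show "((\<lambda>u. 1 / ln u) has_integral integral {a..b} (\<lambda>u. 1 / ln u)) {a..b}"
      using recip_ln_int[OF ab] by auto
    fix u assume "u \<in> {a..b}"
    hence "1 < u" using ab by auto
    from recip_ln_tangent[OF m1(1) this] show "1 / ln m + c * (u - m) \<le> 1 / ln u"
      unfolding c_def by linarith
  qed
  thus ?thesis by (simp add: m_def)
qed

lemma Lf_cont: "continuous_on {1 + exp (-3)..3} Lf"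
proof -
  have "continuous_on {1..3} (\<lambda>x. integral {1..x} gg)"
    by (rule indefinite_integral_continuous_1[OF gg_int1]) simp
  hence c1: "continuous_on {1 + exp (-3)..3} (\<lambda>x. integral {1..x} gg)"
    by (rule continuous_on_subset) auto
  have c2: "continuous_on {1 + exp (-3)..(3::real)} (\<lambda>x. ln (x - 1))"
    by (intro continuous_intros) (use exp_gt_zero[of "-3::real"] in auto)
  show ?thesis unfolding Lf_def by (intro continuous_intros c1 c2)
qed

lemma li_zero_exists: "\<exists>z>1. li z = 0"
proof -
  have e: "0 < exp (-3::real)" "exp (-3::real) < 1" by auto
  have "Lf (1 + exp (-3)) \<le> 0"
  proof -
    have "integral {0..1} gg \<le> 1" using gg_integral_bounds[of 0 1] by auto
    moreover have "integral {1..1 + exp (-3)} gg \<le> exp (-3)" using gg_integral_bounds[of 1 "1 + exp (-3)"] by auto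
    moreover have "ln (1 + exp (-3) - 1) = (-3::real)" by simp
    ultimately show ?thesis unfolding Lf_def using e by linarith
  qed
  moreover have "0 \<le> Lf 3"
  proof -
    have "0 \<le> integral {0..1} gg" using gg_integral_bounds[of 0 1] by auto
    moreover have "0 \<le> integral {1..3} gg" using gg_integral_bounds[of 1 3] by auto
    moreover have "0 \<le> ln (3 - 1::real)" by simp
    ultimately show ?thesis unfolding Lf_def by linarith
  qed
  moreover have "1 + exp (-3) \<le> (3::real)" using e by linarith
  ultimately obtain z where z: "1 + exp (-3) \<le> z" "z \<le> 3" "Lf z = 0"
    using IVT'[of Lf "1 + exp (-3)" 0 3] Lf_cont by blast
  hence "1 < z" using e by linarith
  thus ?thesis using z li_eq by auto
qed

lemma li_strict_mono: "1 < (a::real) \<Longrightarrow> a < b \<Longrightarrow> li a < li b"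
  using li_diff[of a b] int_pos[of a b] by auto

lemma mu_props: "1 < soldner_mu \<and> li soldner_mu = 0"
proof -
  have "\<exists>!x. x > 1 \<and> li x = 0"
  proof -
    obtain z where z: "z > 1" "li z = 0" using li_zero_exists by blast
    moreover have "y = z" if "y > 1" "li y = 0" for y
      using li_strict_mono[of y z] li_strict_mono[of z y] that z by (cases y z rule: linorder_cases) auto
    ultimately show ?thesis by blast
  qed
  from theI'[OF this] show ?thesis unfolding soldner_mu_def .
qed

theorem corollary3p12:
  fixes t r R :: real
  assumes "r = soldner_mu * exp (- t)"
      and "R = real_of_int \<lceil>r\<rceil>"
  shows "0 \<le> li (exp t * R) / exp t
       \<and> li (exp t * R) / exp t < li (soldner_mu + exp t) / exp t
       \<and> li (soldner_mu + exp t) / exp t < 1 / ln soldner_mu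
       \<and> 0 \<le> (R - r) / (t + ln R)
       \<and> (R - r) / (t + ln R) \<le> (R - r) / (t + ln ((R + r) / 2))
       \<and> (R - r) / (t + ln ((R + r) / 2)) \<le> li (exp t * R) / exp t
       \<and> li (exp t * R) / exp t \<le> (R - r) / ln soldner_mu
       \<and> (R - r) / ln soldner_mu < 1 / ln soldner_mu"
proof -
  define \<mu> where "\<mu> = soldner_mu"
  define E where "E = exp t"
  have mu1: "1 < \<mu>" and li0: "li \<mu> = 0" using mu_props by (auto simp: \<mu>_def)
  have E0: "0 < E" by (simp add: E_def)
  have lmu: "0 < ln \<mu>" using mu1 by simp
  have Er: "E * r = \<mu>" using assms(1) by (simp add: E_def \<mu>_def exp_minus field_simps)
  have r0: "0 < r" using assms(1) mu1 by (simp add: \<mu>_def)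
  have Rr: "r \<le> R" "R < r + 1" using assms(2) using ceiling_correct[of r] le_of_int_ceiling[of r] by auto
  hence R0: "0 < R" using r0 by linarith
  define X where "X = E * R"
  define Y where "Y = \<mu> + E"
  have muX: "\<mu> \<le> X" using Er Rr E0 unfolding X_def by (metis mult_left_mono less_imp_le)
  have XY: "X < Y"
  proof -
    have "E * R < E * (r + 1)" using Rr E0 by simp
    thus ?thesis using Er unfolding X_def Y_def by (simp add: algebra_simps)
  qed
  have X1: "1 < X" using mu1 muX by linarith
  have liX: "li X = integral {\<mu>..X} (\<lambda>u. 1 / ln u)" using li_diff[OF mu1 muX] li0 by simp
  have liY: "li Y = integral {\<mu>..Y} (\<lambda>u. 1 / ln u)" using li_diff[OF mu1, of Y] li0 muX XY by simp
  have XmE: "X - \<mu> = E * (R - r)" using Er unfolding X_def by (simp add: algebra_simps)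
  have lnX: "t + ln R = ln X" unfolding X_def E_def using R0 by (simp add: ln_mult)
  have lnM: "t + ln ((R + r) / 2) = ln ((\<mu> + X) / 2)"
  proof -
    have "(\<mu> + X) / 2 = E * ((R + r) / 2)" using Er unfolding X_def by (simp add: algebra_simps)
    moreover have "ln (E * ((R + r) / 2)) = ln E + ln ((R + r) / 2)"
      using R0 r0 E0 by (intro ln_mult_pos) auto
    moreover have "ln E = t" by (simp add: E_def)
    ultimately show ?thesis by metis
  qed
  have M1: "\<mu> \<le> (\<mu> + X) / 2" "(\<mu> + X) / 2 \<le> X" using muX by auto
  have lM0: "ln \<mu> \<le> ln ((\<mu> + X) / 2)" using M1 mu1 by simp
  have lMX: "ln ((\<mu> + X) / 2) \<le> ln X" using M1 mu1 by simp
  have Rr0: "0 \<le> R - r" using Rr by simp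
  have c1: "0 \<le> li X / E"
  proof -
    have "0 \<le> (X - \<mu>) / ln X" using muX X1 by simp
    thus ?thesis using int_lower[OF mu1 muX] liX E0 by simp
  qed
  have c2: "li X / E < li Y / E"
  proof -
    have "li Y - li X = integral {X..Y} (\<lambda>u. 1 / ln u)" using li_diff[OF X1] XY by simp
    moreover have "0 < integral {X..Y} (\<lambda>u. 1 / ln u)" using int_pos[OF X1 XY] .
    ultimately show ?thesis using E0 by (simp add: divide_strict_right_mono)
  qed
  have c3: "li Y / E < 1 / ln \<mu>"
  proof -
    have "li Y < (Y - \<mu>) / ln \<mu>" using liY int_upper_strict[OF mu1, of Y] muX XY by simp
    hence "li Y < E / ln \<mu>" unfolding Y_def by simp
    thus ?thesis using E0 lmu by (simp add: field_simps)
  qed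
  have c4: "0 \<le> (R - r) / (t + ln R)" using lnX lmu lM0 lMX Rr0 by simp
  have c5: "(R - r) / (t + ln R) \<le> (R - r) / (t + ln ((R + r) / 2))"
    unfolding lnX lnM using Rr0 lmu lM0 lMX by (intro divide_left_mono) auto
  have c6: "(R - r) / (t + ln ((R + r) / 2)) \<le> li X / E"
  proof -
    have "(X - \<mu>) / ln ((\<mu> + X) / 2) \<le> li X" using int_hh[OF mu1 muX] liX by simp
    hence "E * (R - r) / ln ((\<mu> + X) / 2) \<le> li X" using XmE by simp
    thus ?thesis unfolding lnM using E0 lmu lM0 by (simp add: field_simps)
  qed
  have c7: "li X / E \<le> (R - r) / ln \<mu>"
  proof -
    have "li X \<le> E * (R - r) / ln \<mu>" using int_upper[OF mu1 muX] liX XmE by simp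
    thus ?thesis using E0 lmu by (simp add: field_simps)
  qed
  have c8: "(R - r) / ln \<mu> < 1 / ln \<mu>" using Rr lmu by (intro divide_strict_right_mono) auto
  show ?thesis using c1 c2 c3 c4 c5 c6 c7 c8 unfolding X_def Y_def E_def \<mu>_def by auto
qed

end
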